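(* Assume (A1)–(A4) and $P^\star\in\Pi_{K^\star}\setminus\Pi_{K^\star-1}$ with $K^\star<\infty$. (a) If, for every $K\ge1$, $P^\star\notin\Pi_K$ implies $H(P^\star|\Pi_{K+1})<H(P^\star|\Pi_K)$, then $P^\star$-a.s. $\widehat K_n^L\ge K^\star$ for all $n$ large enough. (b) $P^\star$-a.s., $\widehat K_n^G\ge K^\star$ for all $n$ large enough.
   Context: Setting: $(\mathcal Z,\mathcal F)$ is a Polish space with its Borel $\sigma$-field and $\mu$ a $\sigma$-finite measure on it. $Z_1,Z_2,\dots$ are i.i.d. $\mathcal Z$-valued random variables with common law $P^\star\ll\mu$, density $p^\star$, $\ell^\star=\log p^\star$; $P^\star$ also denotes the law of the whole sequence. $\{(\Theta_K,d)\}_{K\ge1}$ is an increasing (nested) sequence of metric spaces, $\Theta_\infty=\bigcup_K\Theta_K$; for $\theta\in\Theta_\infty$, $P_\theta$ is a probability measure with density $p_\theta$ w.r.t. $\mu$ and $\ell_\theta=\log p_\theta$. $\Pi_K=\{P_\theta:\theta\in\Theta_K\}$, $\Pi_0=\emptyset$. The order of $P^\star$ is $K^\star=\min\{K:P^\star\in\Pi_K\}$. $H(P|Q)=\int\log(dP/dQ)\,dP$ if $P\ll Q$ and $+\infty$ otherwise; $H(P|\Pi)=\inf_{Q\in\Pi}H(P|Q)$. Given a penalty $\mathrm{pen}(n,K)>0$, $\mathrm{crit}(n,K)=\sup_{\theta\in\Theta_K}\sum_{i=1}^n\ell_\theta(Z_i)-\mathrm{pen}(n,K)$, $\widehat K_n^L=\inf\{K\ge1:\mathrm{crit}(n,K)\ge\mathrm{crit}(n,K+1)\}$,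 and $\widehat K_n^G$ is the smallest maximizer of $K\mapsto\mathrm{crit}(n,K)$. All suprema are assumed measurable. Standing assumptions: (A1) each $(\Theta_K,d)$ is compact and each $\Pi_K$ is compact for the weak topology; (A2) for each $z$ and $K$, $\theta\mapsto\ell_\theta(z)$ is continuous on $\Theta_K$; (A3) there are $l,u:\mathcal Z\to\mathbb R$ with $u-l\in L^1(P^\star)$, $l\le\ell^\star\le u$ and $l\le\ell_\theta\le u$ for all $\theta\in\Theta_\infty$; (A4) for each $n$, $\mathrm{pen}(n,\cdot)$ is increasing, and for each $K$, $\mathrm{pen}(n,K)\to\infty$ and $\mathrm{pen}(n,K)=o(n)$ as $n\to\infty$. *)

theory Defs
  imports "HOL-Probability.Probability"
begin

definition dens_measure :: "'z measure \<Rightarrow> ('z \<Rightarrow> real) \<Rightarrow> 'z measure" where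
  "dens_measure mu f = density mu (\<lambda>z. ennreal (f z))"

text \<open>Since the negative part of log(dP/dQ) is always P-integrable, non-integrability means
  the integral is +infinity.  KL_divergence b M N is the library's int log_b(dN/dM) dN.\<close>
definition KL :: "'a measure \<Rightarrow> 'a measure \<Rightarrow> ereal" where
  "KL P Q = (if absolutely_continuous Q P \<and> integrable P (\<lambda>x. ln (enn2real (RN_deriv Q P x)))
             then ereal (KL_divergence (exp 1) Q P) else \<infinity>)"

definition KL_set :: "'a measure \<Rightarrow> 'a measure set \<Rightarrow> ereal" where
  "KL_set P S = (INF Q\<in>S. KL P Q)"

definition weak_conv_seq :: "(nat \<Rightarrow> 'z::topological_space measure) \<Rightarrow> 'z measure \<Rightarrow> bool" where
  "weak_conv_seq Ps P \<longleftrightarrow>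
     (\<forall>f::'z \<Rightarrow> real. continuous_on UNIV f \<and> bounded (range f) \<longrightarrow>
        (\<lambda>n. \<integral>z. f z \<partial>(Ps n)) \<longlonglongrightarrow> (\<integral>z. f z \<partial>P))"

text \<open>Compactness for the weak topology (sequential; the weak topology on probability
  measures over a Polish space is metrizable).\<close>
definition weakly_seq_compact :: "'z::topological_space measure set \<Rightarrow> bool" where
  "weakly_seq_compact S \<longleftrightarrow>
     (\<forall>Ps::nat \<Rightarrow> 'z measure. (\<forall>n. Ps n \<in> S) \<longrightarrow> (\<exists>Q\<in>S. \<exists>r::nat \<Rightarrow> nat. strict_mono r \<and> weak_conv_seq (Ps \<circ> r) Q))"

definition model_class :: "'z measure \<Rightarrow> ('p \<Rightarrow> 'z \<Rightarrow> real) \<Rightarrow> (nat \<Rightarrow> 'p set) \<Rightarrow> nat \<Rightarrow> 'z measure set" where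
  "model_class mu p Theta K = (if K = 0 then {} else (\<lambda>\<theta>. dens_measure mu (p \<theta>)) ` Theta K)"

text \<open>crit(n,K) = sup_{theta in Theta_K} sum_{i=1}^n log p_theta(Z_i) - pen(n,K)
  (observations indexed Z 0, ..., Z (n-1)).\<close>
definition crit :: "('p \<Rightarrow> 'z \<Rightarrow> real) \<Rightarrow> (nat \<Rightarrow> 'p set) \<Rightarrow> (nat \<Rightarrow> nat \<Rightarrow> real)
    \<Rightarrow> (nat \<Rightarrow> 'w \<Rightarrow> 'z) \<Rightarrow> nat \<Rightarrow> nat \<Rightarrow> 'w \<Rightarrow> ereal" where
  "crit p Theta pen Z n K \<omega> =
     (SUP \<theta>\<in>Theta K. ereal (\<Sum>i<n. ln (p \<theta> (Z i \<omega>)))) - ereal (pen n K)"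

definition KhatL :: "('p \<Rightarrow> 'z \<Rightarrow> real) \<Rightarrow> (nat \<Rightarrow> 'p set) \<Rightarrow> (nat \<Rightarrow> nat \<Rightarrow> real)
    \<Rightarrow> (nat \<Rightarrow> 'w \<Rightarrow> 'z) \<Rightarrow> nat \<Rightarrow> 'w \<Rightarrow> enat" where
  "KhatL p Theta pen Z n \<omega> =
     Inf {enat K | K. 1 \<le> K \<and> crit p Theta pen Z n (Suc K) \<omega> \<le> crit p Theta pen Z n K \<omega>}"

definition KhatG :: "('p \<Rightarrow> 'z \<Rightarrow> real) \<Rightarrow> (nat \<Rightarrow> 'p set) \<Rightarrow> (nat \<Rightarrow> nat \<Rightarrow> real)
    \<Rightarrow> (nat \<Rightarrow> 'w \<Rightarrow> 'z) \<Rightarrow> nat \<Rightarrow> 'w \<Rightarrow> enat" where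
  "KhatG p Theta pen Z n \<omega> =
     (if \<exists>K\<ge>1. \<forall>K'\<ge>1. crit p Theta pen Z n K' \<omega> \<le> crit p Theta pen Z n K \<omega>
      then enat (LEAST K. 1 \<le> K \<and> (\<forall>K'\<ge>1. crit p Theta pen Z n K' \<omega> \<le> crit p Theta pen Z n K \<omega>))
      else \<infinity>)"

end

theory Submission
  imports Defs
begin

lemma pow2_bracket: "1 \<le> (n::nat) \<Longrightarrow> \<exists>m. n < 2^m \<and> 2^m \<le> 2*n"
proof (induction n rule: nat_induct_at_least)
  case base then show ?case by (intro exI[of _ 1]) auto
next
  case (Suc n)
  then obtain m where m: "n < 2^m" "2^m \<le> 2*n" by auto
  show ?case
  proof (cases "Suc n < 2^m")
    case True then show ?thesis using m by (intro exI[of _ m]) auto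
  next
    case False then have "Suc n = 2^m" using m by auto
    then show ?thesis by (intro exI[of _ "Suc m"]) auto
  qed
qed

lemma min_sq_step: fixes x y S :: real assumes "0 \<le> x" "0 < y"
  and "S \<le> 4 * min x y - 2 * (min x y)^2 / y"
 shows "S + (min x y)^2 / y \<le> 4 * min x (2*y) - 2 * (min x (2*y))^2 / (2*y)"
proof (cases "x \<le> y")
  case True
  then show ?thesis using assms by (simp add: min_def)
next
  case F: False
  show ?thesis
  proof (cases "x \<le> 2*y")
    case True
    have "y + 2*y \<le> 4*x - x^2/y"
    proof -
      have "(x - y) * (3*y - x) \<ge> 0" using F True assms by (intro mult_nonneg_nonneg) auto
      then have "3*y*y \<le> 4*x*y - x^2" by (simp add: algebra_simps power2_eq_square)
      then have "3*y*y/y \<le> (4*x*y - x^2)/y" using assms by (intro divide_right_mono) auto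
      then show ?thesis using assms by (simp add: diff_divide_distrib power2_eq_square)
    qed
    then show ?thesis using assms F True by (simp add: min_def power2_eq_square)
  next
    case False
    then show ?thesis using assms F by (simp add: min_def power2_eq_square)
  qed
qed

lemma min_sq_sum: fixes x :: real assumes "0 \<le> x"
  shows "(\<Sum>m<N. (min x (2^m))^2 / 2^m) \<le> 4 * min x (2^N) - 2 * (min x (2^N))^2 / 2^N"
proof (induction N)
  case 0
  have "min x 1 ^ 2 \<le> min x 1" using assms by (simp add: power2_eq_square min_def mult_left_le_one_le)
  moreover have "0 \<le> min x 1" using assms by simp
  ultimately have "(min x 1)^2 \<le> 2 * min x 1" by linarith
  then show ?case by simp
next
  case (Suc N)
  show ?case using min_sq_step[OF assms _ Suc.IH] by simp
qed

lemma min_sq_sum_le: fixes x :: real assumes "0 \<le> x"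
  shows "(\<Sum>m<N. (min x (2^m))^2 / 2^m) \<le> 4 * x"
proof -
  have "0 \<le> 2 * (min x (2^N))^2 / 2^N" by simp
  then show ?thesis using min_sq_sum[OF assms, of N] by (smt (verit) min.cobounded1)
qed

context prob_space begin

lemma slln_bounded:
  fixes X :: "nat \<Rightarrow> 'a \<Rightarrow> 'z" and g :: "'z \<Rightarrow> real"
  assumes indep: "indep_vars (\<lambda>_. N) X UNIV"
    and law: "\<And>i. distr M N (X i) = Q"
    and g[measurable]: "g \<in> borel_measurable N"
    and bnd: "\<And>z. z \<in> space N \<Longrightarrow> a \<le> g z \<and> g z \<le> b"
    and eps: "\<epsilon> > 0"
  shows "AE \<omega> in M. eventually (\<lambda>n. (\<Sum>i<n. g (X i \<omega>)) \<le> real n * ((\<integral>z. g z \<partial>Q) + \<epsilon>)) sequentially"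
proof -
  define b' where "b' = max b (a + 1)"
  have ab: "a < b'" unfolding b'_def by auto
  have bnd': "\<And>z. z \<in> space N \<Longrightarrow> a \<le> g z \<and> g z \<le> b'" using bnd unfolding b'_def by force
  have Xm[measurable]: "\<And>i. X i \<in> measurable M N" using indep unfolding indep_vars_def by auto
  define Y where "Y = (\<lambda>i \<omega>. g (X i \<omega>))"
  have Ym[measurable]: "\<And>i. Y i \<in> borel_measurable M" unfolding Y_def by measurable
  have indepY: "indep_vars (\<lambda>_. borel) Y UNIV"
    unfolding Y_def by (rule indep_vars_compose2[OF indep]) auto
  have EY: "expectation (Y i) = (\<integral>z. g z \<partial>Q)" for i
    unfolding Y_def law[symmetric, of i] by (subst integral_distr) auto
  have distrY: "distr M borel (Y i) = distr M borel (Y 0)" for i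
  proof -
    have "distr M borel (Y i) = distr (distr M N (X i)) borel g"
      unfolding Y_def by (subst distr_distr) (auto simp: comp_def)
    also have "\<dots> = distr (distr M N (X 0)) borel g" by (simp add: law)
    also have "\<dots> = distr M borel (Y 0)"
      unfolding Y_def by (subst distr_distr) (auto simp: comp_def)
    finally show ?thesis .
  qed
  define A where "A n = {\<omega>\<in>space M. (\<Sum>i<n. Y i \<omega>) / real n \<ge> (\<integral>z. g z \<partial>Q) + \<epsilon>}" for n
  have Am[measurable]: "A n \<in> events" for n unfolding A_def by measurable
  have PA: "prob (A n) \<le> exp (-2 * real n * \<epsilon>\<^sup>2 / (b' - a)\<^sup>2)" if "n > 0" for n
  proof -
    interpret H: Hoeffding_ineq_iid M "{..<n}" Y "Y 0" a b' "expectation (Y 0)"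
    proof (unfold_locales)
      show "finite {..<n}" by simp
      show "random_variable borel (Y 0)" by (rule Ym)
      show "\<And>i. i \<in> {..<n} \<Longrightarrow> distr M borel (Y i) = distr M borel (Y 0)" by (rule distrY)
      show "indep_vars (\<lambda>_. borel) Y {..<n}" using indep_vars_subset[OF indepY] by auto
      show "AE x in M. Y 0 x \<in> {a..b'}"
        by (intro AE_I2) (use bnd' measurable_space[OF Xm[of 0]] in \<open>auto simp: Y_def\<close>)
    qed
    have "{..<n} \<noteq> {}" using that by auto
    then show ?thesis using H.Hoeffding_ineq_ge'[of \<epsilon>] that eps ab by (simp add: A_def EY)
  qed
  have "summable (\<lambda>n. exp (-2 * real n * \<epsilon>\<^sup>2 / (b' - a)\<^sup>2))"
  proof -
    have "summable (\<lambda>n. (exp (-2 * \<epsilon>\<^sup>2 / (b' - a)\<^sup>2)) ^ n)"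
      using eps ab by (intro summable_geometric) auto
    then show ?thesis by (simp add: exp_of_nat_mult[symmetric] mult_ac)
  qed
  then have sumA: "summable (\<lambda>n. measure M (A n))"
  proof (rule summable_comparison_test'[where N=1])
    fix n :: nat assume "1 \<le> n" then show "norm (measure M (A n)) \<le> exp (-2 * real n * \<epsilon>\<^sup>2 / (b' - a)\<^sup>2)"
      using PA[of n] by simp
  qed
  have "AE \<omega> in M. eventually (\<lambda>n. \<omega> \<in> space M - A n) sequentially"
    by (rule borel_cantelli_AE1) (auto simp: sumA less_top[symmetric])
  then show ?thesis
  proof (rule AE_mp, intro AE_I2 impI)
    fix \<omega> assume \<omega>: "\<omega> \<in> space M" and ev: "eventually (\<lambda>n. \<omega> \<in> space M - A n) sequentially"
    show "eventually (\<lambda>n. (\<Sum>i<n. g (X i \<omega>)) \<le> real n * ((\<integral>z. g z \<partial>Q) + \<epsilon>)) sequentially"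
      using ev eventually_gt_at_top[of 0]
    proof eventually_elim
      case (elim n)
      then have "(\<Sum>i<n. Y i \<omega>) / real n < (\<integral>z. g z \<partial>Q) + \<epsilon>" using \<omega> by (auto simp: A_def)
      then show ?case using elim by (simp add: Y_def divide_less_eq mult_ac)
    qed
  qed
qed

end

context prob_space begin

lemma variance_sum_indep_le:
  fixes Y :: "'i \<Rightarrow> 'a \<Rightarrow> real"
  assumes fin: "finite I" and indep: "indep_vars (\<lambda>_. borel) Y I"
    and bnd: "\<And>i \<omega>. i \<in> I \<Longrightarrow> \<omega> \<in> space M \<Longrightarrow> \<bar>Y i \<omega>\<bar> \<le> B"
    and mu: "\<And>i. i \<in> I \<Longrightarrow> expectation (Y i) = \<mu>"
    and s: "\<And>i. i \<in> I \<Longrightarrow> expectation (\<lambda>\<omega>. (Y i \<omega>)\<^sup>2) = s"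
  shows "variance (\<lambda>\<omega>. \<Sum>i\<in>I. Y i \<omega>) \<le> real (card I) * s"
proof -
  have Ym[measurable]: "\<And>i. i \<in> I \<Longrightarrow> Y i \<in> borel_measurable M"
    using indep unfolding indep_vars_def by auto
  have intY: "integrable M (Y i)" if "i \<in> I" for i
    by (rule integrable_const_bound[where B=B]) (use bnd that in auto)
  have intYY: "integrable M (\<lambda>\<omega>. Y i \<omega> * Y j \<omega>)" if "i \<in> I" "j \<in> I" for i j
  proof (rule integrable_const_bound[where B="B*B"])
    show "AE x in M. norm (Y i x * Y j x) \<le> B * B"
      using bnd[OF that(1)] bnd[OF that(2)]
      by (intro AE_I2) (simp add: abs_mult mult_mono' )
  qed (use that in auto)
  have cross: "expectation (\<lambda>\<omega>. Y i \<omega> * Y j \<omega>) = (if i = j then s else \<mu>\<^sup>2)"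
    if "i \<in> I" "j \<in> I" for i j
  proof (cases "i = j")
    case True then show ?thesis using s[OF that(1)] by (simp add: power2_eq_square)
  next
    case False
    have ind2: "indep_vars (\<lambda>_. borel) Y {i, j}"
      using indep_vars_subset[OF indep] that by auto
    have "expectation (\<lambda>\<omega>. \<Prod>k\<in>{i,j}. Y k \<omega>) = (\<Prod>k\<in>{i,j}. expectation (Y k))"
      by (rule indep_vars_lebesgue_integral) (use ind2 intY that in auto)
    then show ?thesis using False mu that by (simp add: power2_eq_square)
  qed
  define S where "S = (\<lambda>\<omega>. \<Sum>i\<in>I. Y i \<omega>)"
  have intS: "integrable M S" unfolding S_def using intY by auto
  have S2: "(\<lambda>\<omega>. (S \<omega>)\<^sup>2) = (\<lambda>\<omega>. \<Sum>i\<in>I. \<Sum>j\<in>I. Y i \<omega> * Y j \<omega>)"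
    unfolding S_def by (auto simp: power2_eq_square sum_product)
  have intS2: "integrable M (\<lambda>\<omega>. (S \<omega>)\<^sup>2)"
    unfolding S2 using intYY by auto
  have ES: "expectation S = real (card I) * \<mu>"
    unfolding S_def using intY mu by (simp add: Bochner_Integration.integral_sum)
  have ES2: "expectation (\<lambda>\<omega>. (S \<omega>)\<^sup>2) = (\<Sum>i\<in>I. \<Sum>j\<in>I. (if i = j then s else \<mu>\<^sup>2))"
    unfolding S2 using intYY cross by (simp add: Bochner_Integration.integral_sum)
  also have "\<dots> = (\<Sum>i\<in>I. (s - \<mu>\<^sup>2) + real (card I) * \<mu>\<^sup>2)"
  proof (rule sum.cong[OF refl])
    fix i assume i: "i \<in> I"
    have "(\<Sum>j\<in>I. (if i = j then s else \<mu>\<^sup>2)) = (\<Sum>j\<in>I. (\<mu>\<^sup>2 + (if i = j then s - \<mu>\<^sup>2 else 0)))"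
      by (rule sum.cong) auto
    also have "\<dots> = real (card I) * \<mu>\<^sup>2 + (s - \<mu>\<^sup>2)"
      using fin i by (simp add: sum.distrib)
    finally show "(\<Sum>j\<in>I. (if i = j then s else \<mu>\<^sup>2)) = (s - \<mu>\<^sup>2) + real (card I) * \<mu>\<^sup>2" by simp
  qed
  also have "\<dots> = real (card I) * (s - \<mu>\<^sup>2) + (real (card I) * \<mu>)\<^sup>2"
    by (simp add: power2_eq_square algebra_simps)
  finally have "variance S = real (card I) * (s - \<mu>\<^sup>2)"
    using variance_eq[OF intS intS2] ES by simp
  also have "\<dots> \<le> real (card I) * s" by (simp add: mult_left_mono)
  finally show ?thesis unfolding S_def .
qed

end

context prob_space begin

lemma slln_tail:
  fixes X :: "nat \<Rightarrow> 'a \<Rightarrow> 'z" and h :: "'z \<Rightarrow> real"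
  assumes indep: "indep_vars (\<lambda>_. N) X UNIV"
    and law: "\<And>i. distr M N (X i) = Q"
    and h[measurable]: "h \<in> borel_measurable N"
    and nn: "\<And>z. z \<in> space N \<Longrightarrow> 0 \<le> h z"
    and inth: "integrable Q h" and c: "c > 0"
  shows "AE \<omega> in M. eventually (\<lambda>n. (\<Sum>i<n. h (X i \<omega>)) \<le> 2 * real n * ((\<integral>z. h z \<partial>Q) + c)) sequentially"
proof -
  have Xm[measurable]: "\<And>i. X i \<in> measurable M N" using indep unfolding indep_vars_def by auto
  have PQ: "prob_space Q" unfolding law[of 0, symmetric] by (rule prob_space_distr) simp
  interpret Q: prob_space Q by (rule PQ)
  have sets_Q: "sets Q = sets N" unfolding law[of 0, symmetric] by simp
  have space_Q: "space Q = space N" unfolding law[of 0, symmetric] by simp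
  have hQ[measurable]: "h \<in> borel_measurable Q" unfolding measurable_cong_sets[OF sets_Q refl] by (rule h)
  define E where "E = (\<integral>z. h z \<partial>Q)"
  have E0: "0 \<le> E" unfolding E_def by (rule integral_nonneg_AE) (use nn space_Q in auto)
  define T where "T m z = min (h z) (2^m)" for m :: nat and z
  have Tm[measurable]: "T m \<in> borel_measurable N" for m unfolding T_def by measurable
  have TmQ[measurable]: "T m \<in> borel_measurable Q" for m unfolding measurable_cong_sets[OF sets_Q refl] by (rule Tm)
  have T_nn: "z \<in> space N \<Longrightarrow> 0 \<le> T m z" for m z using nn unfolding T_def by auto
  have T_bnd: "z \<in> space N \<Longrightarrow> \<bar>T m z\<bar> \<le> 2^m" for m z using nn unfolding T_def by auto
  have intT: "integrable Q (T m)" for m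
    by (rule Q.integrable_const_bound[where B="2^m"]) (use T_bnd space_Q in auto)
  have intT2: "integrable Q (\<lambda>z. (T m z)\<^sup>2)" for m
  proof (rule Q.integrable_const_bound[where B="2^m * 2^m"])
    show "AE x in Q. norm ((T m x)\<^sup>2) \<le> 2^m * 2^m"
    proof (intro AE_I2)
      fix x assume "x \<in> space Q"
      then have "0 \<le> T m x" "T m x \<le> 2^m" using T_bnd[of x m] T_nn[of x m] space_Q by auto
      then show "norm ((T m x)\<^sup>2) \<le> 2^m * 2^m" by (simp add: power2_eq_square mult_mono')
    qed
  qed simp
  define a where "a m = (\<integral>z. (T m z)\<^sup>2 / 2^m \<partial>Q)" for m :: nat
  have a_nn: "0 \<le> a m" for m unfolding a_def by (rule integral_nonneg_AE) auto
  have suma: "summable a"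
  proof (rule summableI_nonneg_bounded[where x="4 * E"])
    show "0 \<le> a m" for m by (rule a_nn)
    fix N' :: nat
    have "(\<Sum>m<N'. a m) = (\<integral>z. (\<Sum>m<N'. (T m z)\<^sup>2 / 2^m) \<partial>Q)"
      unfolding a_def using intT2 by (subst Bochner_Integration.integral_sum) auto
    also have "\<dots> \<le> (\<integral>z. 4 * h z \<partial>Q)"
    proof (rule integral_mono)
      show "integrable Q (\<lambda>z. \<Sum>m<N'. (T m z)\<^sup>2 / 2 ^ m)" using intT2 by auto
      show "integrable Q (\<lambda>z. 4 * h z)" using inth by auto
      fix z assume "z \<in> space Q"
      then show "(\<Sum>m<N'. (T m z)\<^sup>2 / 2 ^ m) \<le> 4 * h z"
        unfolding T_def using min_sq_sum_le[of "h z" N'] nn space_Q by auto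
    qed
    finally show "sum a {..<N'} \<le> 4 * E" unfolding E_def by simp
  qed
  define A where "A m = {\<omega>\<in>space M. 2^m * (E + c) < (\<Sum>i<2^m. h (X i \<omega>))}" for m :: nat
  have Am[measurable]: "A m \<in> events" for m unfolding A_def by measurable
  have PA: "prob (A m) \<le> (1 + 1 / c\<^sup>2) * a m" for m
  proof -
    define k :: nat where "k = 2^m"
    have k_real: "real k = 2^m" unfolding k_def by simp
    define B1 where "B1 = (\<Union>i<k. {\<omega>\<in>space M. 2^m < h (X i \<omega>)})"
    define S where "S \<omega> = (\<Sum>i<k. T m (X i \<omega>))" for \<omega>
    have Sm[measurable]: "S \<in> borel_measurable M" unfolding S_def by measurable
    define B2 where "B2 = {\<omega>\<in>space M. 2^m * c \<le> \<bar>S \<omega> - expectation S\<bar>}"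
    have ET: "expectation (\<lambda>\<omega>. T m (X i \<omega>)) = (\<integral>z. T m z \<partial>Q)" for i
      unfolding law[of i, symmetric] by (subst integral_distr) auto
    have ET2: "expectation (\<lambda>\<omega>. (T m (X i \<omega>))\<^sup>2) = (\<integral>z. (T m z)\<^sup>2 \<partial>Q)" for i
      unfolding law[of i, symmetric] by (subst integral_distr) auto
    have intTX: "integrable M (\<lambda>\<omega>. T m (X i \<omega>))" for i
      using intT[of m] unfolding law[of i, symmetric] by (subst (asm) integrable_distr_eq) auto
    have ES: "expectation S = real k * (\<integral>z. T m z \<partial>Q)"
      unfolding S_def using intTX ET by (simp add: Bochner_Integration.integral_sum)
    have ETle: "(\<integral>z. T m z \<partial>Q) \<le> E"
      unfolding E_def by (rule integral_mono) (use intT inth in \<open>auto simp: T_def\<close>)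
    have sub: "A m \<subseteq> B1 \<union> B2"
    proof
      fix \<omega> assume w: "\<omega> \<in> A m"
      show "\<omega> \<in> B1 \<union> B2"
      proof (cases "\<omega> \<in> B1")
        case False
        have w': "\<omega> \<in> space M" using w by (auto simp: A_def)
        then have "\<forall>i<k. h (X i \<omega>) \<le> 2^m" using False by (auto simp: B1_def not_less)
        then have "S \<omega> = (\<Sum>i<k. h (X i \<omega>))" unfolding S_def T_def by (intro sum.cong) auto
        then have "2^m * (E + c) < S \<omega>" using w by (simp add: A_def k_def)
        moreover have "expectation S \<le> 2^m * E" using ES ETle k_real by (simp add: mult_left_mono)
        ultimately have "2^m * c \<le> \<bar>S \<omega> - expectation S\<bar>" by (simp add: algebra_simps)
        then show ?thesis using w' by (auto simp: B2_def)
      qed auto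
    qed
    have B1m: "B1 \<in> events" unfolding B1_def by measurable
    have B2m: "B2 \<in> events" unfolding B2_def by measurable
    have ind_ev: "measure Q {z\<in>space Q. 2^m < h z} * 2^m \<le> a m"
    proof -
      have "measure Q {z\<in>space Q. 2^m < h z} * 2^m = (\<integral>z. (indicator {z\<in>space Q. 2^m < h z} z :: real) * 2^m \<partial>Q)"
        by simp
      also have "\<dots> \<le> a m" unfolding a_def
      proof (rule integral_mono)
        show "integrable Q (\<lambda>z. (indicator {z\<in>space Q. 2^m < h z} z :: real) * 2^m)"
          by (intro integrable_mult_left integrable_real_indicator) (auto simp: less_top[symmetric])
        show "integrable Q (\<lambda>z. (T m z)\<^sup>2 / 2^m)" using intT2 by auto
        fix z assume "z \<in> space Q"
        show "(indicator {z\<in>space Q. 2^m < h z} z :: real) * 2^m \<le> (T m z)\<^sup>2 / 2^m"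
        proof (cases "2^m < h z")
          case True
          then have "T m z = 2^m" unfolding T_def by auto
          then show ?thesis using True \<open>z \<in> space Q\<close> by (simp add: power2_eq_square)
        qed (auto simp: indicator_def)
      qed
      finally show ?thesis .
    qed
    have P1: "prob B1 \<le> a m"
    proof -
      have "prob B1 \<le> (\<Sum>i<k. prob {\<omega>\<in>space M. 2^m < h (X i \<omega>)})"
        unfolding B1_def by (rule finite_measure_subadditive_finite) auto
      also have "\<dots> = (\<Sum>i<k. measure Q {z\<in>space Q. 2^m < h z})"
      proof (rule sum.cong[OF refl])
        fix i
        have "measure Q {z\<in>space Q. 2^m < h z} = prob (X i -` {z\<in>space Q. 2^m < h z} \<inter> space M)"
          unfolding law[of i, symmetric] by (subst measure_distr) auto
        also have "X i -` {z\<in>space Q. 2^m < h z} \<inter> space M = {\<omega>\<in>space M. 2^m < h (X i \<omega>)}"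
          using measurable_space[OF Xm[of i]] space_Q by auto
        finally show "prob {\<omega>\<in>space M. 2^m < h (X i \<omega>)} = measure Q {z\<in>space Q. 2^m < h z}" by simp
      qed
      also have "\<dots> = measure Q {z\<in>space Q. 2^m < h z} * 2^m" using k_real by simp
      finally show ?thesis using ind_ev by simp
    qed
    have P2: "prob B2 \<le> a m / c\<^sup>2"
    proof -
      have "prob B2 \<le> variance S / (2^m * c)\<^sup>2"
        unfolding B2_def
      proof (rule Chebyshev_inequality)
        show "integrable M (\<lambda>x. (S x)\<^sup>2)"
        proof (rule integrable_const_bound[where B="(real k * 2^m)\<^sup>2"])
          show "AE x in M. norm ((S x)\<^sup>2) \<le> (real k * 2^m)\<^sup>2"
          proof (intro AE_I2)
            fix x assume x: "x \<in> space M"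
            have "\<bar>S x\<bar> \<le> (\<Sum>i<k. \<bar>T m (X i x)\<bar>)" unfolding S_def by (rule sum_abs)
            also have "\<dots> \<le> (\<Sum>i<k. 2^m)"
              by (intro sum_mono T_bnd measurable_space[OF Xm] x)
            finally have "\<bar>S x\<bar> \<le> real k * 2^m" by simp
            then show "norm ((S x)\<^sup>2) \<le> (real k * 2^m)\<^sup>2"
            proof -
              have "\<bar>S x\<bar>\<^sup>2 \<le> (real k * 2^m)\<^sup>2" by (rule power_mono[OF \<open>\<bar>S x\<bar> \<le> real k * 2^m\<close> abs_ge_zero])
              then show ?thesis by simp
            qed
          qed
        qed simp
      qed (use c in auto)
      also have "variance S \<le> real (card {..<k}) * (\<integral>z. (T m z)\<^sup>2 \<partial>Q)"
        unfolding S_def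
      proof (rule variance_sum_indep_le[where B="2^m" and \<mu>="\<integral>z. T m z \<partial>Q"])
        show "indep_vars (\<lambda>_. borel) (\<lambda>i \<omega>. T m (X i \<omega>)) {..<k}"
          using indep_vars_subset[OF indep_vars_compose2[OF indep, of "\<lambda>_. T m"]] by auto
        show "\<And>i \<omega>. \<omega> \<in> space M \<Longrightarrow> \<bar>T m (X i \<omega>)\<bar> \<le> 2 ^ m"
          by (intro T_bnd measurable_space[OF Xm])
      qed (auto simp: ET ET2)
      finally have "prob B2 \<le> real k * (\<integral>z. (T m z)\<^sup>2 \<partial>Q) / (2^m * c)\<^sup>2"
        by (simp add: divide_right_mono)
      also have "\<dots> = a m / c\<^sup>2"
        unfolding a_def k_real by (simp add: power2_eq_square field_simps)
      finally show ?thesis .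
    qed
    have "prob (A m) \<le> prob (B1 \<union> B2)" by (rule finite_measure_mono[OF sub]) (use B1m B2m in auto)
    also have "\<dots> \<le> prob B1 + prob B2" by (rule measure_Un_le) (use B1m B2m in auto)
    also have "\<dots> \<le> (1 + 1 / c\<^sup>2) * a m" using P1 P2 by (simp add: algebra_simps)
    finally show ?thesis .
  qed
  have sumA: "summable (\<lambda>m. measure M (A m))"
  proof (rule summable_comparison_test'[where N=0])
    show "summable (\<lambda>m. (1 + 1 / c\<^sup>2) * a m)" using suma by (rule summable_mult)
    fix m :: nat show "norm (measure M (A m)) \<le> (1 + 1 / c\<^sup>2) * a m" using PA[of m] by simp
  qed
  have "AE \<omega> in M. eventually (\<lambda>m. \<omega> \<in> space M - A m) sequentially"
    by (rule borel_cantelli_AE1) (auto simp: sumA less_top[symmetric])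
  then show ?thesis unfolding E_def[symmetric]
  proof (rule AE_mp, intro AE_I2 impI)
    fix \<omega> assume \<omega>: "\<omega> \<in> space M" and ev: "eventually (\<lambda>m. \<omega> \<in> space M - A m) sequentially"
    then obtain M0 where M0: "\<And>m. m \<ge> M0 \<Longrightarrow> \<omega> \<notin> A m" by (auto simp: eventually_sequentially)
    have hX: "0 \<le> h (X i \<omega>)" for i using nn measurable_space[OF Xm \<omega>] by auto
    show "eventually (\<lambda>n. (\<Sum>i<n. h (X i \<omega>)) \<le> 2 * real n * (E + c)) sequentially"
      unfolding eventually_sequentially
    proof (intro exI allI impI)
      fix n :: nat assume n: "2^M0 \<le> n"
      then have "1 \<le> n" using one_le_power[of "2::nat" M0] by linarith
      then obtain m where m: "n < 2^m" "2^m \<le> 2*n" using pow2_bracket by blast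
      have "M0 < m"
      proof (rule ccontr)
        assume "\<not> M0 < m" then have "(2::nat)^m \<le> 2^M0" by (intro power_increasing) auto
        then show False using m n by linarith
      qed
      then have nA: "\<omega> \<notin> A m" using M0 by auto
      have "(\<Sum>i<n. h (X i \<omega>)) \<le> (\<Sum>i<2^m. h (X i \<omega>))"
        using m(1) hX by (intro sum_mono2) auto
      also have "\<dots> \<le> 2^m * (E + c)" using nA \<omega> by (auto simp: A_def not_less)
      also have "\<dots> \<le> 2 * real n * (E + c)"
      proof (rule mult_right_mono)
        have "real (2^m) \<le> real (2*n)" using m(2) by (simp only: of_nat_le_iff)
        then show "(2::real)^m \<le> 2 * real n" by simp
      qed (use E0 c in auto)
      finally show "(\<Sum>i<n. h (X i \<omega>)) \<le> 2 * real n * (E + c)" .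
    qed
  qed
qed

end

context prob_space begin

lemma slln_upper:
  fixes X :: "nat \<Rightarrow> 'a \<Rightarrow> 'z" and f :: "'z \<Rightarrow> real"
  assumes indep: "indep_vars (\<lambda>_. N) X UNIV"
    and law: "\<And>i. distr M N (X i) = Q"
    and f[measurable]: "f \<in> borel_measurable N"
    and intf: "integrable Q f" and eps: "\<epsilon> > 0"
  shows "AE \<omega> in M. eventually (\<lambda>n. (\<Sum>i<n. f (X i \<omega>)) \<le> real n * ((\<integral>z. f z \<partial>Q) + \<epsilon>)) sequentially"
proof -
  have Xm[measurable]: "\<And>i. X i \<in> measurable M N" using indep unfolding indep_vars_def by auto
  have sets_Q: "sets Q = sets N" unfolding law[of 0, symmetric] by simp
  have space_Q: "space Q = space N" unfolding law[of 0, symmetric] by simp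
  have fQ[measurable]: "f \<in> borel_measurable Q" unfolding measurable_cong_sets[OF sets_Q refl] by (rule f)
  define H where "H j z = max (\<bar>f z\<bar> - real j) 0" for j :: nat and z
  have HQ[measurable]: "H j \<in> borel_measurable Q" for j unfolding H_def by measurable
  have HN[measurable]: "H j \<in> borel_measurable N" for j unfolding H_def by measurable
  have intH: "integrable Q (H j)" for j
    by (rule Bochner_Integration.integrable_bound[OF integrable_abs[OF intf]]) (auto simp: H_def)
  have "(\<lambda>j. \<integral>z. H j z \<partial>Q) \<longlonglongrightarrow> (\<integral>z. 0 \<partial>Q)"
  proof (rule integral_dominated_convergence[where w="\<lambda>z. \<bar>f z\<bar>"])
    show "integrable Q (\<lambda>z. \<bar>f z\<bar>)" using intf by auto
    show "AE x in Q. (\<lambda>j. H j x) \<longlonglongrightarrow> 0"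
    proof (intro AE_I2)
      fix x
      obtain j0 :: nat where "\<bar>f x\<bar> \<le> real j0" using real_arch_simple by blast
      then have "eventually (\<lambda>j. H j x = 0) sequentially"
        unfolding eventually_sequentially H_def by (intro exI[of _ j0]) auto
      then show "(\<lambda>j. H j x) \<longlonglongrightarrow> 0" by (rule tendsto_eventually)
    qed
    show "\<And>j. AE x in Q. norm (H j x) \<le> \<bar>f x\<bar>" by (auto simp: H_def)
  qed auto
  then have "(\<lambda>j. \<integral>z. H j z \<partial>Q) \<longlonglongrightarrow> 0" by simp
  moreover have "\<epsilon> / 10 > 0" using eps by simp
  ultimately have "eventually (\<lambda>j. (\<integral>z. H j z \<partial>Q) < \<epsilon> / 10) sequentially"
    by (rule order_tendstoD(2))
  then obtain j where j: "(\<integral>z. H j z \<partial>Q) < \<epsilon> / 10"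
    unfolding eventually_sequentially by auto
  define g where "g z = max (min (f z) (real j)) (- real j)" for z
  have gN[measurable]: "g \<in> borel_measurable N" unfolding g_def by measurable
  have gQ[measurable]: "g \<in> borel_measurable Q" unfolding g_def by measurable
  have intg: "integrable Q g"
    by (rule Bochner_Integration.integrable_bound[OF integrable_abs[OF intf]]) (auto simp: g_def)
  have fgh: "f z \<le> g z + H j z" for z unfolding g_def H_def by auto
  have "(\<integral>z. g z \<partial>Q) \<le> (\<integral>z. f z + H j z \<partial>Q)"
  proof (rule integral_mono)
    show "integrable Q (\<lambda>z. f z + H j z)" using intf intH by auto
    show "\<And>z. z \<in> space Q \<Longrightarrow> g z \<le> f z + H j z" unfolding g_def H_def by auto
  qed (rule intg)
  then have Eg: "(\<integral>z. g z \<partial>Q) \<le> (\<integral>z. f z \<partial>Q) + (\<integral>z. H j z \<partial>Q)"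
    using intf intH by simp
  have "\<epsilon> / 2 > 0" using eps by simp
  from slln_bounded[OF indep law gN _ this, of "- real j" "real j"]
  have AEg: "AE \<omega> in M. eventually (\<lambda>n. (\<Sum>i<n. g (X i \<omega>)) \<le> real n * ((\<integral>z. g z \<partial>Q) + \<epsilon> / 2)) sequentially"
    by (auto simp: g_def)
  have "\<epsilon> / 10 > 0" using eps by simp
  from slln_tail[OF indep law HN _ intH this]
  have AEh: "AE \<omega> in M. eventually (\<lambda>n. (\<Sum>i<n. H j (X i \<omega>)) \<le> 2 * real n * ((\<integral>z. H j z \<partial>Q) + \<epsilon> / 10)) sequentially"
    by (auto simp: H_def)
  from AEg AEh show ?thesis
  proof (eventually_elim)
    case (elim \<omega>)
    from elim(1) elim(2) show ?case
    proof eventually_elim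
      case (elim n)
      have "(\<Sum>i<n. f (X i \<omega>)) \<le> (\<Sum>i<n. g (X i \<omega>)) + (\<Sum>i<n. H j (X i \<omega>))"
        unfolding sum.distrib[symmetric] by (rule sum_mono) (rule fgh)
      also have "\<dots> \<le> real n * ((\<integral>z. g z \<partial>Q) + \<epsilon> / 2) + 2 * real n * ((\<integral>z. H j z \<partial>Q) + \<epsilon> / 10)"
        using elim by linarith
      also have "\<dots> \<le> real n * ((\<integral>z. f z \<partial>Q) + \<epsilon>)"
      proof -
        have H0: "0 \<le> (\<integral>z. H j z \<partial>Q)" by (rule integral_nonneg_AE) (auto simp: H_def)
        have "(\<integral>z. g z \<partial>Q) + \<epsilon> / 2 + 2 * ((\<integral>z. H j z \<partial>Q) + \<epsilon> / 10) \<le> (\<integral>z. f z \<partial>Q) + \<epsilon>"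
          using Eg j H0 by (simp add: algebra_simps)
        then have "real n * ((\<integral>z. g z \<partial>Q) + \<epsilon> / 2 + 2 * ((\<integral>z. H j z \<partial>Q) + \<epsilon> / 10)) \<le> real n * ((\<integral>z. f z \<partial>Q) + \<epsilon>)"
          by (intro mult_left_mono) auto
        then show ?thesis by (simp add: algebra_simps)
      qed
      finally show ?case .
    qed
  qed
qed

end

lemma compact_countable_dense:
  fixes T :: "'p::metric_space set"
  assumes "compact T"
  obtains C where "countable C" "C \<subseteq> T" "\<And>\<theta> e. \<theta> \<in> T \<Longrightarrow> e > 0 \<Longrightarrow> \<exists>x\<in>C. dist x \<theta> < e"
proof -
  have tb: "\<forall>\<epsilon>>0. \<exists>k. finite k \<and> k \<subseteq> T \<and> T \<subseteq> (\<Union>x\<in>k. ball x \<epsilon>)"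
    by (rule seq_compact_imp_totally_bounded[OF compact_imp_seq_compact[OF assms]])
  have "\<forall>n::nat. \<exists>k. finite k \<and> k \<subseteq> T \<and> T \<subseteq> (\<Union>x\<in>k. ball x (1 / Suc n))"
  proof
    fix n :: nat have "(1::real) / Suc n > 0" by simp
    then show "\<exists>k. finite k \<and> k \<subseteq> T \<and> T \<subseteq> (\<Union>x\<in>k. ball x (1 / Suc n))" using tb by blast
  qed
  then have "\<exists>F. \<forall>n::nat. finite (F n) \<and> F n \<subseteq> T \<and> T \<subseteq> (\<Union>x\<in>F n. ball x (1 / Suc n))"
    by (rule choice)
  then obtain F where F: "\<And>n. finite (F n) \<and> F n \<subseteq> T \<and> T \<subseteq> (\<Union>x\<in>F n. ball x (1 / Suc n))"
    by blast
  show ?thesis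
  proof (rule that[of "\<Union>n. F n"])
    show "countable (\<Union>n. F n)"
    proof (rule countable_UN)
      fix n show "countable (F n)" using F[of n] by (simp add: countable_finite)
    qed simp
    show "(\<Union>n. F n) \<subseteq> T" using F by auto
    fix \<theta> e assume th: "\<theta> \<in> T" and e: "(e::real) > 0"
    obtain n :: nat where n: "1 / Suc n < e" using e by (metis nat_approx_posE)
    from F[of n] th obtain x where x: "x \<in> F n" "\<theta> \<in> ball x (1 / Suc n)" by auto
    then have "dist x \<theta> < e" using n by (simp add: mem_ball)
    then show "\<exists>x\<in>\<Union>n. F n. dist x \<theta> < e" using x(1) by blast
  qed
qed

locale msetup =
  fixes mu :: "'z::polish_space measure" and pstar :: "'z \<Rightarrow> real"
    and p :: "'p::metric_space \<Rightarrow> 'z \<Rightarrow> real" and Theta :: "nat \<Rightarrow> 'p set"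
    and M :: "'w measure" and Z :: "nat \<Rightarrow> 'w \<Rightarrow> 'z"
    and l u :: "'z \<Rightarrow> real"
  assumes sets_mu: "sets mu = sets (borel :: 'z measure)"
    and sigma_fin: "sigma_finite_measure mu"
    and pstar_meas: "pstar \<in> borel_measurable mu"
    and pstar_prob: "prob_space (dens_measure mu pstar)"
    and p_dens: "\<forall>\<theta>\<in>(\<Union>K\<in>{1..}. Theta K).
                   p \<theta> \<in> borel_measurable mu \<and> prob_space (dens_measure mu (p \<theta>))"
    and M_prob: "prob_space M"
    and Z_indep: "prob_space.indep_vars M (\<lambda>_. borel) Z UNIV"
    and Z_law: "\<forall>i. distr M borel (Z i) = dens_measure mu pstar"
    and A2: "\<forall>K\<ge>1. \<forall>z. continuous_on (Theta K) (\<lambda>\<theta>. ln (p \<theta> z))"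
    and A3_int: "integrable (dens_measure mu pstar) (\<lambda>z. u z - l z)"
    and A3_star: "\<forall>z. 0 < pstar z \<and> l z \<le> ln (pstar z) \<and> ln (pstar z) \<le> u z"
    and A3_model: "\<forall>\<theta>\<in>(\<Union>K\<in>{1..}. Theta K). \<forall>z.
                     0 < p \<theta> z \<and> l z \<le> ln (p \<theta> z) \<and> ln (p \<theta> z) \<le> u z"
begin

abbreviation "Q \<equiv> dens_measure mu pstar"
abbreviation "Tinf \<equiv> (\<Union>K\<in>{1..}. Theta K)"
abbreviation "D \<theta> z \<equiv> ln (p \<theta> z) - ln (pstar z)"
abbreviation "ED \<theta> \<equiv> (\<integral>z. D \<theta> z \<partial>Q)"

lemma space_mu: "space mu = UNIV"
  using sets_eq_imp_space_eq[OF sets_mu] by simp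
lemma meas_mu: "measurable mu N = measurable borel N"
  by (rule measurable_cong_sets[OF sets_mu refl])
lemma sets_Q: "sets Q = sets borel"
  unfolding dens_measure_def using sets_mu by simp
lemma space_Q: "space Q = UNIV"
  unfolding dens_measure_def using space_mu by simp
lemma meas_Q: "measurable Q N = measurable borel N"
  by (rule measurable_cong_sets[OF sets_Q refl])
lemma pstar_b[measurable]: "pstar \<in> borel_measurable borel"
  using pstar_meas by (simp add: meas_mu)
lemma p_b: "\<theta> \<in> Tinf \<Longrightarrow> p \<theta> \<in> borel_measurable borel"
  using p_dens by (auto simp: meas_mu)
lemma D_b: "\<theta> \<in> Tinf \<Longrightarrow> D \<theta> \<in> borel_measurable borel"
  using p_b[of \<theta>] by measurable
lemma D_bnd: "\<theta> \<in> Tinf \<Longrightarrow> \<bar>D \<theta> z\<bar> \<le> u z - l z"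
proof -
  assume th: "\<theta> \<in> Tinf"
  have "l z \<le> ln (pstar z)" "ln (pstar z) \<le> u z" using A3_star by auto
  moreover have "l z \<le> ln (p \<theta> z)" "ln (p \<theta> z) \<le> u z" using A3_model th by auto
  ultimately show ?thesis by linarith
qed
lemma G_b: "(\<lambda>z. u z - l z) \<in> borel_measurable borel"
  using borel_measurable_integrable[OF A3_int] by (simp add: meas_Q)
lemma Q_prob: "prob_space Q" by (rule pstar_prob)
lemma lu: "l z \<le> u z"
proof -
  have "l z \<le> ln (pstar z)" "ln (pstar z) \<le> u z" using A3_star by auto
  then show ?thesis by linarith
qed
lemma bound_int: "f \<in> borel_measurable borel \<Longrightarrow> (\<And>z. \<bar>f z\<bar> \<le> u z - l z) \<Longrightarrow> integrable Q f"
proof (rule Bochner_Integration.integrable_bound[OF A3_int])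
  assume "\<And>z. \<bar>f z\<bar> \<le> u z - l z"
  then show "AE x in Q. norm (f x) \<le> norm (u x - l x)" using lu by (intro AE_I2) (smt (verit) real_norm_def)
qed (auto simp: meas_Q)
lemma D_int: "\<theta> \<in> Tinf \<Longrightarrow> integrable Q (D \<theta>)"
  by (rule bound_int) (use D_b D_bnd in auto)

lemma slln_Q:
  assumes "f \<in> borel_measurable borel" "integrable Q f" "\<epsilon> > 0"
  shows "AE \<omega> in M. eventually (\<lambda>n. (\<Sum>i<n. f (Z i \<omega>)) \<le> real n * ((\<integral>z. f z \<partial>Q) + \<epsilon>)) sequentially"
  by (rule prob_space.slln_upper[OF M_prob Z_indep]) (use Z_law assms in auto)

lemma contD: "1 \<le> K \<Longrightarrow> continuous_on (Theta K) (\<lambda>\<theta>. D \<theta> z)"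
  using A2 by (intro continuous_on_diff continuous_on_const) auto

lemma UB:
  assumes K: "1 \<le> K" and cmp: "compact (Theta K)" and bnd: "\<forall>\<theta>\<in>Theta K. ED \<theta> < c"
  shows "AE \<omega> in M. eventually (\<lambda>n. \<forall>\<theta>\<in>Theta K. (\<Sum>i<n. D \<theta> (Z i \<omega>)) \<le> real n * c) sequentially"
proof -
  define T where "T = Theta K"
  have TT: "T \<subseteq> Tinf" unfolding T_def using K by auto
  obtain C where C: "countable C" "C \<subseteq> T" and dense: "\<And>\<theta> e. \<theta> \<in> T \<Longrightarrow> e > 0 \<Longrightarrow> \<exists>x\<in>C. dist x \<theta> < e"
    using compact_countable_dense[OF cmp] unfolding T_def by metis
  define W where "W \<theta>0 r z = (SUP \<theta>\<in>C \<inter> ball \<theta>0 r. D \<theta> z)" for \<theta>0 r z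
  have cD: "continuous_on T (\<lambda>\<theta>. D \<theta> z)" for z unfolding T_def by (rule contD[OF K])
  have ne: "C \<inter> ball \<theta>0 r \<noteq> {}" if "\<theta>0 \<in> T" "r > 0" for \<theta>0 r
    using dense[OF that] by (auto simp: mem_ball dist_commute)
  have bdd: "bdd_above ((\<lambda>\<theta>. D \<theta> z) ` (C \<inter> ball \<theta>0 r))" for \<theta>0 r z
  proof (rule bdd_aboveI2)
    fix \<theta> assume "\<theta> \<in> C \<inter> ball \<theta>0 r"
    then have "\<theta> \<in> Tinf" using C TT by auto
    then show "D \<theta> z \<le> u z - l z" using D_bnd[of \<theta> z] by linarith
  qed
  have le_W: "D \<theta> z \<le> W \<theta>0 r z" if th0: "\<theta>0 \<in> T" and r: "r > 0" and th: "\<theta> \<in> T" and d: "dist \<theta>0 \<theta> < r"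
    for \<theta>0 r \<theta> z
  proof -
    define s where "s = r - dist \<theta>0 \<theta>"
    have s: "s > 0" using d by (simp add: s_def)
    have "\<forall>k::nat. \<exists>x\<in>C. dist x \<theta> < min s (1 / Suc k)"
    proof
      fix k :: nat have "min s (1 / Suc k) > 0" using s by simp
      from dense[OF th this] show "\<exists>x\<in>C. dist x \<theta> < min s (1 / Suc k)" .
    qed
    then obtain x where x: "\<And>k. x k \<in> C" "\<And>k. dist (x k) \<theta> < min s (1 / Suc k)" by metis
    have xb: "x k \<in> ball \<theta>0 r" for k
    proof -
      have "dist \<theta>0 (x k) \<le> dist \<theta>0 \<theta> + dist (x k) \<theta>" by (rule dist_triangle2)
      also have "\<dots> < r" using x(2)[of k] by (simp add: s_def)
      finally show ?thesis by (simp add: mem_ball)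
    qed
    have lim: "x \<longlonglongrightarrow> \<theta>"
      unfolding lim_sequentially
    proof (intro allI impI)
      fix e :: real assume e: "e > 0"
      obtain N :: nat where N: "1 / Suc N < e" using e by (metis nat_approx_posE)
      show "\<exists>no. \<forall>n\<ge>no. dist (x n) \<theta> < e"
      proof (intro exI allI impI)
        fix n assume "N \<le> n"
        then have "1 / real (Suc n) \<le> 1 / Suc N" by (intro divide_left_mono) auto
        then show "dist (x n) \<theta> < e" using x(2)[of n] N by linarith
      qed
    qed
    have "(\<lambda>k. D (x k) z) \<longlonglongrightarrow> D \<theta> z"
    proof (rule continuous_on_tendsto_compose[OF cD lim th])
      have "\<And>k. x k \<in> T" using x(1) C(2) by blast
      then show "\<forall>\<^sub>F k in sequentially. x k \<in> T" by simp
    qed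
    moreover have "\<exists>N. \<forall>n\<ge>N. D (x n) z \<le> W \<theta>0 r z"
      unfolding W_def using x(1) xb by (intro exI[of _ 0] allI impI cSUP_upper bdd) auto
    ultimately show ?thesis by (rule LIMSEQ_le_const2)
  qed
  have W_bnd: "\<bar>W \<theta>0 r z\<bar> \<le> u z - l z" if "\<theta>0 \<in> T" "r > 0" for \<theta>0 r z
  proof -
    have "D \<theta>0 z \<le> W \<theta>0 r z" using le_W[OF that that(1)] that by simp
    moreover have "\<bar>D \<theta>0 z\<bar> \<le> u z - l z" using D_bnd[of \<theta>0 z] that TT by auto
    moreover have "W \<theta>0 r z \<le> u z - l z"
      unfolding W_def
    proof (rule cSUP_least[OF ne[OF that]])
      fix \<theta> assume "\<theta> \<in> C \<inter> ball \<theta>0 r"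
      then have "\<theta> \<in> Tinf" using C TT by auto
      then show "D \<theta> z \<le> u z - l z" using D_bnd[of \<theta> z] by linarith
    qed
    ultimately show ?thesis by linarith
  qed
  have W_b: "W \<theta>0 r \<in> borel_measurable borel" if "\<theta>0 \<in> T" "r > 0" for \<theta>0 r
    unfolding W_def
  proof (rule borel_measurable_cSUP)
    show "countable (C \<inter> ball \<theta>0 r)" using C by auto
    show "\<And>\<theta>. \<theta> \<in> C \<inter> ball \<theta>0 r \<Longrightarrow> (\<lambda>z. D \<theta> z) \<in> borel_measurable borel"
      using C TT D_b by auto
  qed (rule bdd)
  have W_int: "integrable Q (W \<theta>0 r)" if "\<theta>0 \<in> T" "r > 0" for \<theta>0 r
    by (rule bound_int[OF W_b[OF that] W_bnd[OF that]])
  have W_lim: "(\<lambda>j. \<integral>z. W \<theta>0 (1 / Suc j) z \<partial>Q) \<longlonglongrightarrow> ED \<theta>0" if th0: "\<theta>0 \<in> T" for \<theta>0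
  proof (rule integral_dominated_convergence[where w="\<lambda>z. u z - l z"])
    have "\<theta>0 \<in> Tinf" using th0 TT by blast
    from D_b[OF this] show "(\<lambda>z. D \<theta>0 z) \<in> borel_measurable Q" by (simp add: meas_Q)
    show "integrable Q (\<lambda>z. u z - l z)" by (rule A3_int)
    show "\<And>j. (W \<theta>0 (1 / Suc j)) \<in> borel_measurable Q" using W_b th0 by (auto simp: meas_Q)
    show "\<And>j. AE z in Q. norm (W \<theta>0 (1 / Suc j) z) \<le> u z - l z"
      using W_bnd th0 by auto
    show "AE z in Q. (\<lambda>j. W \<theta>0 (1 / Suc j) z) \<longlonglongrightarrow> D \<theta>0 z"
    proof (intro AE_I2)
      fix z
      show "(\<lambda>j. W \<theta>0 (1 / Suc j) z) \<longlonglongrightarrow> D \<theta>0 z"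
        unfolding lim_sequentially
      proof (intro allI impI)
        fix e :: real assume e: "e > 0"
        then have "e / 2 > 0" by simp
        with cD[of z] th0 obtain d where d: "d > 0"
          and dd: "\<And>\<theta>. \<theta> \<in> T \<Longrightarrow> dist \<theta> \<theta>0 < d \<Longrightarrow> dist (D \<theta> z) (D \<theta>0 z) < e / 2"
          unfolding continuous_on_iff by metis
        obtain N :: nat where N: "1 / Suc N < d" using d by (metis nat_approx_posE)
        show "\<exists>no. \<forall>n\<ge>no. dist (W \<theta>0 (1 / Suc n) z) (D \<theta>0 z) < e"
        proof (intro exI allI impI)
          fix n assume "N \<le> n"
          then have "1 / real (Suc n) \<le> 1 / Suc N" by (intro divide_left_mono) auto
          then have rn: "1 / real (Suc n) < d" using N by linarith
          have lo: "D \<theta>0 z \<le> W \<theta>0 (1 / Suc n) z" using le_W[OF th0 _ th0] by simp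
          have hi: "W \<theta>0 (1 / Suc n) z \<le> D \<theta>0 z + e / 2"
            unfolding W_def
          proof (rule cSUP_least[OF ne[OF th0]])
            show "0 < 1 / real (Suc n)" by simp
            fix \<theta> assume th: "\<theta> \<in> C \<inter> ball \<theta>0 (1 / real (Suc n))"
            then have "\<theta> \<in> T" "dist \<theta> \<theta>0 < d" using C rn by (auto simp: mem_ball dist_commute)
            then have "dist (D \<theta> z) (D \<theta>0 z) < e / 2" by (rule dd)
            then have "\<bar>D \<theta> z - D \<theta>0 z\<bar> < e / 2" by (simp only: dist_real_def)
            then show "D \<theta> z \<le> D \<theta>0 z + e / 2" by linarith
          qed
          show "dist (W \<theta>0 (1 / Suc n) z) (D \<theta>0 z) < e"
            using lo hi e unfolding dist_real_def by linarith
        qed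
      qed
    qed
  qed
  have ex_r: "\<exists>r>0. (\<integral>z. W \<theta>0 r z \<partial>Q) < c" if th0: "\<theta>0 \<in> T" for \<theta>0
  proof -
    have "ED \<theta>0 < c" using bnd th0 unfolding T_def by auto
    from order_tendstoD(2)[OF W_lim[OF th0] this]
    obtain j where "(\<integral>z. W \<theta>0 (1 / Suc j) z \<partial>Q) < c" unfolding eventually_sequentially by auto
    then show ?thesis by (intro exI[of _ "1 / Suc j"]) auto
  qed
  then obtain r where r: "\<And>\<theta>0. \<theta>0 \<in> T \<Longrightarrow> r \<theta>0 > 0 \<and> (\<integral>z. W \<theta>0 (r \<theta>0) z \<partial>Q) < c"
    by metis
  have cmpT: "compact T" unfolding T_def by (rule cmp)
  obtain F where F: "F \<subseteq> T" "finite F" "T \<subseteq> (\<Union>\<theta>0\<in>F. ball \<theta>0 (r \<theta>0))"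
  proof (rule compactE_image[OF cmpT, of T "\<lambda>\<theta>0. ball \<theta>0 (r \<theta>0)"])
    show "T \<subseteq> (\<Union>\<theta>0\<in>T. ball \<theta>0 (r \<theta>0))" using r by force
  qed auto
  have AEF: "AE \<omega> in M. \<forall>\<theta>0\<in>F. eventually (\<lambda>n. (\<Sum>i<n. W \<theta>0 (r \<theta>0) (Z i \<omega>)) \<le> real n * c) sequentially"
  proof (rule AE_finite_allI[OF F(2)])
    fix \<theta>0 assume "\<theta>0 \<in> F"
    then have th0: "\<theta>0 \<in> T" using F by auto
    have r0: "r \<theta>0 > 0" using r[OF th0] by simp
    have "c - (\<integral>z. W \<theta>0 (r \<theta>0) z \<partial>Q) > 0" using r[OF th0] by simp
    from slln_Q[OF W_b[OF th0 r0] W_int[OF th0 r0] this]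
    show "AE \<omega> in M. eventually (\<lambda>n. (\<Sum>i<n. W \<theta>0 (r \<theta>0) (Z i \<omega>)) \<le> real n * c) sequentially"
      by simp
  qed
  then show ?thesis
  proof (rule AE_mp, intro AE_I2 impI)
    fix \<omega> assume "\<forall>\<theta>0\<in>F. eventually (\<lambda>n. (\<Sum>i<n. W \<theta>0 (r \<theta>0) (Z i \<omega>)) \<le> real n * c) sequentially"
    then have "eventually (\<lambda>n. \<forall>\<theta>0\<in>F. (\<Sum>i<n. W \<theta>0 (r \<theta>0) (Z i \<omega>)) \<le> real n * c) sequentially"
      by (rule eventually_ball_finite[OF F(2)])
    then show "eventually (\<lambda>n. \<forall>\<theta>\<in>Theta K. (\<Sum>i<n. D \<theta> (Z i \<omega>)) \<le> real n * c) sequentially"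
    proof eventually_elim
      case (elim n)
      show ?case
      proof
        fix \<theta> assume "\<theta> \<in> Theta K"
        then have th: "\<theta> \<in> T" unfolding T_def .
        then obtain \<theta>0 where th0: "\<theta>0 \<in> F" "\<theta> \<in> ball \<theta>0 (r \<theta>0)" using F(3) by auto
        have th0T: "\<theta>0 \<in> T" using th0 F by auto
        have "(\<Sum>i<n. D \<theta> (Z i \<omega>)) \<le> (\<Sum>i<n. W \<theta>0 (r \<theta>0) (Z i \<omega>))"
          by (intro sum_mono le_W[OF th0T _ th]) (use r[OF th0T] th0 in \<open>auto simp: mem_ball\<close>)
        also have "\<dots> \<le> real n * c" using elim th0 by auto
        finally show "(\<Sum>i<n. D \<theta> (Z i \<omega>)) \<le> real n * c" .
      qed
    qed
  qed
qed

end

lemma ln_lt_minus_one: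
  fixes x :: real assumes "0 < x" "x \<noteq> 1" shows "ln x < x - 1"
proof -
  define s where "s = sqrt x"
  have s: "0 < s" "s \<noteq> 1" "s^2 = x" using assms by (auto simp: s_def)
  have "ln x = 2 * ln s" using ln_sqrt[of x] assms by (simp add: s_def)
  also have "\<dots> \<le> 2 * (s - 1)" using ln_le_minus_one[OF s(1)] by simp
  also have "\<dots> < s^2 - 1"
  proof -
    have "0 < (s - 1)^2" using s by simp
    then show ?thesis by (simp add: power2_eq_square algebra_simps)
  qed
  finally show ?thesis using s by simp
qed

context msetup begin

lemma dens_int:
  assumes th: "\<theta> \<in> Tinf"
  shows "integrable mu (p \<theta>)" "(\<integral>z. p \<theta> z \<partial>mu) = 1"
proof -
  have pm[measurable]: "p \<theta> \<in> borel_measurable mu" using p_dens th by auto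
  have pp: "prob_space (dens_measure mu (p \<theta>))" using p_dens th by auto
  have "emeasure (dens_measure mu (p \<theta>)) (space mu) = 1"
    using prob_space.emeasure_space_1[OF pp] by (simp add: dens_measure_def)
  then have nn: "(\<integral>\<^sup>+z. ennreal (p \<theta> z) \<partial>mu) = ennreal 1"
    unfolding dens_measure_def by (simp add: emeasure_density nn_integral_density)
  show "integrable mu (p \<theta>)"
    by (rule integrableI_nn_integral_finite[OF pm _ nn]) (use A3_model th in \<open>auto intro!: less_imp_le\<close>)
  have "(\<integral>z. p \<theta> z \<partial>mu) = enn2real (\<integral>\<^sup>+z. ennreal (p \<theta> z) \<partial>mu)"
    by (rule integral_eq_nn_integral[OF pm]) (use A3_model th in \<open>auto intro!: less_imp_le\<close>)
  then show "(\<integral>z. p \<theta> z \<partial>mu) = 1" using nn by simp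
qed

lemma gibbs:
  assumes th: "\<theta> \<in> Tinf" and ne: "dens_measure mu (p \<theta>) \<noteq> Q"
  shows "ED \<theta> < 0"
proof (rule ccontr)
  assume "\<not> ED \<theta> < 0"
  then have ED0: "0 \<le> ED \<theta>" by simp
  have pm[measurable]: "p \<theta> \<in> borel_measurable mu" using p_dens th by auto
  have pmb[measurable]: "p \<theta> \<in> borel_measurable borel" using p_b th by auto
  have ppos: "0 < p \<theta> z" for z using A3_model th by auto
  have spos: "0 < pstar z" for z using A3_star by auto
  define q where "q z = p \<theta> z / pstar z" for z
  have qpos: "0 < q z" for z unfolding q_def using ppos spos by simp
  have qb[measurable]: "q \<in> borel_measurable borel" unfolding q_def by measurable
  have lnq: "ln (q z) = D \<theta> z" for z unfolding q_def using ppos[of z] spos[of z] by (simp add: ln_div)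
  have pq: "pstar z * q z = p \<theta> z" for z unfolding q_def using spos[of z] by simp
  have intq: "integrable Q q"
    unfolding dens_measure_def
    by (subst integrable_density) (use pstar_meas spos dens_int(1)[OF th] in \<open>auto simp: meas_mu pq less_imp_le\<close>)
  have Eq: "(\<integral>z. q z \<partial>Q) = 1"
    unfolding dens_measure_def
    by (subst integral_density) (use pstar_meas spos dens_int(2)[OF th] in \<open>auto simp: meas_mu pq less_imp_le\<close>)
  define psi where "psi z = q z - 1 - ln (q z)" for z
  have psi_nn: "0 \<le> psi z" for z unfolding psi_def using ln_le_minus_one[OF qpos[of z]] by simp
  interpret Qp: prob_space Q by (rule Q_prob)
  have i1: "integrable Q (\<lambda>z. q z - 1)" using intq by auto
  have intpsi: "integrable Q psi" unfolding psi_def lnq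
    by (rule Bochner_Integration.integrable_diff[OF i1 D_int[OF th]])
  have "(\<integral>z. psi z \<partial>Q) = (\<integral>z. q z \<partial>Q) - 1 - ED \<theta>"
    unfolding psi_def lnq using intq D_int[OF th] by (simp add: Qp.prob_space)
  then have "(\<integral>z. psi z \<partial>Q) \<le> 0" using Eq ED0 by simp
  moreover have "(\<integral>z. psi z \<partial>Q) \<ge> 0" by (rule integral_nonneg_AE) (simp add: psi_nn)
  ultimately have "(\<integral>z. psi z \<partial>Q) = 0" by simp
  then have "AE z in Q. psi z = 0" using integral_nonneg_eq_0_iff_AE[OF intpsi] psi_nn by simp
  then have "AE z in Q. q z = 1"
  proof (rule AE_mp, intro AE_I2 impI)
    fix z assume "psi z = 0"
    then show "q z = 1" using ln_lt_minus_one[OF qpos[of z]] unfolding psi_def by force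
  qed
  then have "AE z in mu. 0 < pstar z \<longrightarrow> q z = 1"
    unfolding dens_measure_def by (subst (asm) AE_density) (use pstar_meas in auto)
  then have "AE z in mu. ennreal (p \<theta> z) = ennreal (pstar z)"
    by (rule AE_mp) (use spos in \<open>auto simp: q_def\<close>)
  then have "density mu (\<lambda>z. ennreal (p \<theta> z)) = density mu (\<lambda>z. ennreal (pstar z))"
    by (intro density_cong) (use pstar_meas in auto)
  then show False using ne unfolding dens_measure_def by simp
qed

lemma ae_eq:
  assumes th: "\<theta> \<in> Tinf" and eq: "dens_measure mu (p \<theta>) = Q"
  shows "AE \<omega> in M. \<forall>i. p \<theta> (Z i \<omega>) = pstar (Z i \<omega>)"
proof -
  interpret mu: sigma_finite_measure mu by (rule sigma_fin)
  have pm[measurable]: "p \<theta> \<in> borel_measurable mu" using p_dens th by auto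
  have "AE z in mu. ennreal (p \<theta> z) = ennreal (pstar z)"
    using eq unfolding dens_measure_def
    by (subst (asm) mu.density_unique_iff) (use pstar_meas in auto)
  then have ae_mu: "AE z in mu. p \<theta> z = pstar z"
    by (rule AE_mp) (use A3_model A3_star th in \<open>auto intro!: AE_I2 simp: less_imp_le\<close>)
  have ae_Q: "AE z in Q. p \<theta> z = pstar z"
    unfolding dens_measure_def by (subst AE_density) (use pstar_meas ae_mu in auto)
  interpret Mp: prob_space M by (rule M_prob)
  have Zm: "Z i \<in> measurable M borel" for i using Z_indep unfolding Mp.indep_vars_def by auto
  show ?thesis
    unfolding AE_all_countable
  proof
    fix i
    have "AE z in distr M borel (Z i). p \<theta> z = pstar z" unfolding Z_law[rule_format] by (rule ae_Q)
    from AE_distrD[OF Zm this] show "AE \<omega> in M. p \<theta> (Z i \<omega>) = pstar (Z i \<omega>)" .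
  qed
qed

lemma KL_eq:
  assumes th: "\<theta> \<in> Tinf"
  shows "KL Q (dens_measure mu (p \<theta>)) = ereal (- ED \<theta>)"
proof -
  define P where "P = dens_measure mu (p \<theta>)"
  have pm[measurable]: "p \<theta> \<in> borel_measurable mu" using p_dens th by auto
  have ppos: "0 < p \<theta> z" for z using A3_model th by auto
  have spos: "0 < pstar z" for z using A3_star by auto
  interpret P: prob_space P unfolding P_def using p_dens th by auto
  have sets_P: "sets P = sets borel" unfolding P_def dens_measure_def using sets_mu by simp
  have meas_P: "measurable P N = measurable borel N" for N by (rule measurable_cong_sets[OF sets_P refl])
  define g where "g z = pstar z / p \<theta> z" for z
  have gb[measurable]: "g \<in> borel_measurable borel" unfolding g_def using p_b[OF th] by measurable
  have gP[measurable]: "g \<in> borel_measurable P" using gb by (simp add: meas_P)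
  have Qeq: "density P g = Q"
    unfolding P_def dens_measure_def g_def
  proof (rule density_density_divide)
    have "p \<theta> z \<noteq> 0" for z using ppos[of z] by simp
    then show "AE x in mu. p \<theta> x = 0 \<longrightarrow> pstar x = 0" by simp
  qed (use pstar_meas ppos spos in \<open>auto simp: less_imp_le\<close>)
  have ac: "absolutely_continuous P Q"
    unfolding Qeq[symmetric] by (rule absolutely_continuousI_density) simp
  have "AE x in P. ennreal (g x) = RN_deriv P Q x"
    by (rule P.RN_deriv_unique[OF _ Qeq]) simp
  then have aeQ: "AE x in Q. ennreal (g x) = RN_deriv P Q x"
    unfolding Qeq[symmetric] by (subst AE_density) (auto elim: AE_mp)
  have lnRN: "AE x in Q. ln (enn2real (RN_deriv P Q x)) = - D \<theta> x"
  proof (rule AE_mp[OF aeQ], intro AE_I2 impI)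
    fix x assume "ennreal (g x) = RN_deriv P Q x"
    then have "enn2real (RN_deriv P Q x) = g x" using ppos[of x] spos[of x]
      by (metis enn2real_ennreal g_def less_imp_le divide_nonneg_pos)
    then show "ln (enn2real (RN_deriv P Q x)) = - D \<theta> x"
      using ppos[of x] spos[of x] by (simp add: g_def ln_div)
  qed
  have RNm: "(\<lambda>x. ln (enn2real (RN_deriv P Q x))) \<in> borel_measurable Q"
  proof -
    have "RN_deriv P Q \<in> borel_measurable P" by (rule borel_measurable_RN_deriv)
    then have "RN_deriv P Q \<in> borel_measurable Q" by (simp add: meas_P meas_Q)
    then show ?thesis by measurable
  qed
  have Dm: "(\<lambda>x. - D \<theta> x) \<in> borel_measurable Q" unfolding meas_Q
    by (intro borel_measurable_uminus D_b[OF th])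
  have int: "integrable Q (\<lambda>x. ln (enn2real (RN_deriv P Q x)))"
    by (subst integrable_cong_AE[OF RNm Dm lnRN]) (rule integrable_minus[OF D_int[OF th]])
  have "KL_divergence (exp 1) P Q = (\<integral>x. ln (enn2real (RN_deriv P Q x)) \<partial>Q)"
    unfolding KL_divergence_def entropy_density_def by (simp add: log_def comp_def)
  also have "\<dots> = (\<integral>x. - D \<theta> x \<partial>Q)" by (rule integral_cong_AE[OF RNm Dm lnRN])
  also have "\<dots> = - ED \<theta>" by (rule Bochner_Integration.integral_minus)
  finally show ?thesis using ac int unfolding KL_def P_def[symmetric] by simp
qed

lemma ED_cont:
  assumes K: "1 \<le> K" shows "continuous_on (Theta K) ED"
proof (rule continuous_on_sequentiallyI)
  fix x a assume x: "\<forall>n. x n \<in> Theta K" and a: "a \<in> Theta K" and lim: "x \<longlonglongrightarrow> a"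
  have xT: "x n \<in> Tinf" for n using x K by auto
  have aT: "a \<in> Tinf" using a K by auto
  show "(\<lambda>n. ED (x n)) \<longlonglongrightarrow> ED a"
  proof (rule integral_dominated_convergence[where w="\<lambda>z. u z - l z"])
    show "D a \<in> borel_measurable Q" using D_b[OF aT] by (simp add: meas_Q)
    show "integrable Q (\<lambda>z. u z - l z)" by (rule A3_int)
    show "\<And>n. D (x n) \<in> borel_measurable Q" using D_b[OF xT] by (simp add: meas_Q)
    show "\<And>n. AE z in Q. norm (D (x n) z) \<le> u z - l z" using D_bnd[OF xT] by auto
    show "AE z in Q. (\<lambda>n. D (x n) z) \<longlonglongrightarrow> D a z"
    proof (intro AE_I2)
      fix z
      show "(\<lambda>n. D (x n) z) \<longlonglongrightarrow> D a z"
        by (rule continuous_on_tendsto_compose[OF contD[OF K] lim a]) (use x in simp)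
    qed
  qed
qed

end

lemma crit_lower:
  assumes "\<theta> \<in> Theta K"
  shows "ereal ((\<Sum>i<n. ln (p \<theta> (Z i \<omega>))) - pen n K) \<le> crit p Theta pen Z n K \<omega>"
proof -
  have "ereal (\<Sum>i<n. ln (p \<theta> (Z i \<omega>))) \<le> (SUP \<theta>\<in>Theta K. ereal (\<Sum>i<n. ln (p \<theta> (Z i \<omega>))))"
    by (rule SUP_upper[OF assms])
  then show ?thesis unfolding crit_def
    by (cases "(SUP \<theta>\<in>Theta K. ereal (\<Sum>i<n. ln (p \<theta> (Z i \<omega>))))") auto
qed

lemma crit_upper:
  assumes "\<And>\<theta>. \<theta> \<in> Theta K \<Longrightarrow> (\<Sum>i<n. ln (p \<theta> (Z i \<omega>))) \<le> B"
  shows "crit p Theta pen Z n K \<omega> \<le> ereal (B - pen n K)"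
proof -
  have "(SUP \<theta>\<in>Theta K. ereal (\<Sum>i<n. ln (p \<theta> (Z i \<omega>)))) \<le> ereal B"
    by (rule SUP_least) (use assms in auto)
  then show ?thesis unfolding crit_def
    by (cases "(SUP \<theta>\<in>Theta K. ereal (\<Sum>i<n. ln (p \<theta> (Z i \<omega>))))") auto
qed

lemma Theta_mono:
  assumes nested: "\<forall>K\<ge>1. Theta K \<subseteq> Theta (Suc K)" and "1 \<le> K" "K \<le> K'"
  shows "Theta K \<subseteq> Theta K'"
  using assms(3)
proof (induction K' rule: dec_induct)
  case (step n)
  have "1 \<le> n" using step.hyps assms(2) by simp
  then have "Theta n \<subseteq> Theta (Suc n)" using nested by blast
  then show ?case using step.IH by blast
qed simp

lemma pen_small:
  assumes "(\<lambda>n. pen n K / real n) \<longlonglongrightarrow> 0" "a > 0"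
  shows "eventually (\<lambda>n. pen n K < a * real n) sequentially"
proof -
  have "eventually (\<lambda>n. pen n K / real n < a) sequentially"
    by (rule order_tendstoD(2)[OF assms])
  then show ?thesis using eventually_gt_at_top[of 0]
    by eventually_elim (simp add: divide_less_eq mult.commute)
qed

theorem propositionB1:
  fixes mu :: "'z::polish_space measure" and pstar :: "'z \<Rightarrow> real"
    and p :: "'p::metric_space \<Rightarrow> 'z \<Rightarrow> real" and Theta :: "nat \<Rightarrow> 'p set"
    and pen :: "nat \<Rightarrow> nat \<Rightarrow> real"
    and M :: "'w measure" and Z :: "nat \<Rightarrow> 'w \<Rightarrow> 'z"
    and l u :: "'z \<Rightarrow> real" and Kstar :: nat
  assumes sets_mu: "sets mu = sets (borel :: 'z measure)"
    and sigma_fin: "sigma_finite_measure mu"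
    and pstar_meas: "pstar \<in> borel_measurable mu"
    and pstar_prob: "prob_space (dens_measure mu pstar)"
    and p_dens: "\<forall>\<theta>\<in>(\<Union>K\<in>{1..}. Theta K).
                   p \<theta> \<in> borel_measurable mu \<and> prob_space (dens_measure mu (p \<theta>))"
    and M_prob: "prob_space M"
    and Z_meas: "\<forall>i. Z i \<in> measurable M (borel :: 'z measure)"
    and Z_indep: "prob_space.indep_vars M (\<lambda>_. borel) Z UNIV"
    and Z_law: "\<forall>i. distr M borel (Z i) = dens_measure mu pstar"
    and nested: "\<forall>K\<ge>1. Theta K \<subseteq> Theta (Suc K)"
    and A1: "\<forall>K\<ge>1. compact (Theta K) \<and> weakly_seq_compact (model_class mu p Theta K)"
    and A2: "\<forall>K\<ge>1. \<forall>z. continuous_on (Theta K) (\<lambda>\<theta>. ln (p \<theta> z))"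
    and A3_int: "integrable (dens_measure mu pstar) (\<lambda>z. u z - l z)"
    and A3_star: "\<forall>z. 0 < pstar z \<and> l z \<le> ln (pstar z) \<and> ln (pstar z) \<le> u z"
    and A3_model: "\<forall>\<theta>\<in>(\<Union>K\<in>{1..}. Theta K). \<forall>z.
                     0 < p \<theta> z \<and> l z \<le> ln (p \<theta> z) \<and> ln (p \<theta> z) \<le> u z"
    and A4_pos: "\<forall>n K. 1 \<le> K \<longrightarrow> 0 < pen n K"
    and A4_mono: "\<forall>n K. 1 \<le> K \<longrightarrow> pen n K \<le> pen n (Suc K)"
    and A4_infty: "\<forall>K\<ge>1. filterlim (\<lambda>n. pen n K) at_top sequentially"
    and A4_small: "\<forall>K\<ge>1. (\<lambda>n. pen n K / real n) \<longlonglongrightarrow> 0"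
    and crit_meas: "\<forall>n K. 1 \<le> K \<longrightarrow> (\<lambda>\<omega>. crit p Theta pen Z n K \<omega>) \<in> borel_measurable M"
    and Kstar_pos: "1 \<le> Kstar"
    and Kstar_in: "dens_measure mu pstar \<in> model_class mu p Theta Kstar"
    and Kstar_notin: "dens_measure mu pstar \<notin> model_class mu p Theta (Kstar - 1)"
  shows "((\<forall>K\<ge>1. dens_measure mu pstar \<notin> model_class mu p Theta K \<longrightarrow>
             KL_set (dens_measure mu pstar) (model_class mu p Theta (Suc K))
               < KL_set (dens_measure mu pstar) (model_class mu p Theta K))
          \<longrightarrow> (AE \<omega> in M. eventually (\<lambda>n. enat Kstar \<le> KhatL p Theta pen Z n \<omega>) sequentially))
       \<and> (AE \<omega> in M. eventually (\<lambda>n. enat Kstar \<le> KhatG p Theta pen Z n \<omega>) sequentially)"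
proof -
  interpret msetup mu pstar p Theta M Z l u
    by (rule msetup.intro[OF sets_mu sigma_fin pstar_meas pstar_prob p_dens M_prob Z_indep Z_law A2 A3_int A3_star A3_model])
  interpret Mp: prob_space M by (rule M_prob)
  have mc: "model_class mu p Theta K = (\<lambda>\<theta>. dens_measure mu (p \<theta>)) ` Theta K" if "1 \<le> K" for K
    using that by (simp add: model_class_def)
  obtain \<theta>s where ths: "\<theta>s \<in> Theta Kstar" "dens_measure mu (p \<theta>s) = Q"
    using Kstar_in mc[OF Kstar_pos] by auto
  have thsT: "\<theta>s \<in> Tinf" using ths Kstar_pos by auto
  have AEstar: "AE \<omega> in M. \<forall>i. p \<theta>s (Z i \<omega>) = pstar (Z i \<omega>)" by (rule ae_eq[OF thsT ths(2)])
  have notin: "dens_measure mu (p \<theta>) \<noteq> Q" if K: "1 \<le> K" "K < Kstar" and th: "\<theta> \<in> Theta K" for K \<theta>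
  proof
    assume eq: "dens_measure mu (p \<theta>) = Q"
    have "Theta K \<subseteq> Theta (Kstar - 1)" by (rule Theta_mono[OF nested]) (use K in auto)
    then have "\<theta> \<in> Theta (Kstar - 1)" using th by auto
    then have "Q \<in> model_class mu p Theta (Kstar - 1)" using eq mc[of "Kstar - 1"] K by force
    then show False using Kstar_notin by simp
  qed
  have cmp: "compact (Theta K)" if "1 \<le> K" for K using A1 that by auto
  have sumD: "(\<Sum>i<n. ln (p \<theta> (Z i \<omega>))) = (\<Sum>i<n. ln (pstar (Z i \<omega>))) + (\<Sum>i<n. D \<theta> (Z i \<omega>))" for \<theta> n \<omega>
    by (simp add: sum_subtractf)
  have critstar: "ereal ((\<Sum>i<n. ln (pstar (Z i \<omega>))) - pen n Kstar) \<le> crit p Theta pen Z n Kstar \<omega>"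
    if "\<forall>i. p \<theta>s (Z i \<omega>) = pstar (Z i \<omega>)" for n \<omega>
    using crit_lower[where \<theta>=\<theta>s and Theta=Theta and K=Kstar and n=n and p=p and Z=Z and \<omega>=\<omega> and pen=pen] ths(1) that by simp
  have bK: "AE \<omega> in M. eventually (\<lambda>n. crit p Theta pen Z n K \<omega> < crit p Theta pen Z n Kstar \<omega>) sequentially"
    if K: "K \<in> {1..<Kstar}" for K
  proof -
    have K1: "1 \<le> K" "K < Kstar" using K by auto
    have neg: "ED \<theta> < 0" if "\<theta> \<in> Theta K" for \<theta>
      using gibbs[OF _ notin[OF K1 that]] that K1 by auto
    obtain c where c: "c < 0" "\<forall>\<theta>\<in>Theta K. ED \<theta> < c"
    proof (cases "Theta K = {}")
      case True then show ?thesis using that[of "-1"] by auto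
    next
      case False
      from continuous_attains_sup[OF cmp[OF K1(1)] False ED_cont[OF K1(1)]]
      obtain \<theta>m where thM: "\<theta>m \<in> Theta K" "\<forall>\<theta>\<in>Theta K. ED \<theta> \<le> ED \<theta>m" by blast
      have "ED \<theta>m < 0" by (rule neg[OF thM(1)])
      then show ?thesis using that[of "ED \<theta>m / 2"] thM(2) by force
    qed
    have ub: "AE \<omega> in M. eventually (\<lambda>n. \<forall>\<theta>\<in>Theta K. (\<Sum>i<n. D \<theta> (Z i \<omega>)) \<le> real n * c) sequentially"
      by (rule UB[OF K1(1) cmp[OF K1(1)] c(2)])
    have pe: "eventually (\<lambda>n. pen n Kstar < (- c) * real n) sequentially"
      by (rule pen_small) (use A4_small Kstar_pos c in auto)
    from ub AEstar show ?thesis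
    proof eventually_elim
      case (elim \<omega>)
      from elim(1) pe show ?case
      proof eventually_elim
        case elim2: (elim n)
        have "crit p Theta pen Z n K \<omega> \<le> ereal ((\<Sum>i<n. ln (pstar (Z i \<omega>))) + real n * c - pen n K)"
          by (rule crit_upper) (use elim2(1) sumD in fastforce)
        also have "\<dots> < ereal ((\<Sum>i<n. ln (pstar (Z i \<omega>))) - pen n Kstar)"
        proof -
          have "0 < pen n K" using A4_pos K1 by auto
          then show ?thesis using elim2(2) by (simp add: algebra_simps)
        qed
        also have "\<dots> \<le> crit p Theta pen Z n Kstar \<omega>" by (rule critstar[OF elim(2)])
        finally show ?case .
      qed
    qed
  qed
  have partb: "AE \<omega> in M. eventually (\<lambda>n. enat Kstar \<le> KhatG p Theta pen Z n \<omega>) sequentially"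
  proof -
    have "AE \<omega> in M. \<forall>K\<in>{1..<Kstar}. eventually (\<lambda>n. crit p Theta pen Z n K \<omega> < crit p Theta pen Z n Kstar \<omega>) sequentially"
      by (rule AE_finite_allI) (use bK in auto)
    then show ?thesis
    proof (rule AE_mp, intro AE_I2 impI)
      fix \<omega> assume "\<forall>K\<in>{1..<Kstar}. eventually (\<lambda>n. crit p Theta pen Z n K \<omega> < crit p Theta pen Z n Kstar \<omega>) sequentially"
      then have "eventually (\<lambda>n. \<forall>K\<in>{1..<Kstar}. crit p Theta pen Z n K \<omega> < crit p Theta pen Z n Kstar \<omega>) sequentially"
        by (rule eventually_ball_finite[rotated]) simp
      then show "eventually (\<lambda>n. enat Kstar \<le> KhatG p Theta pen Z n \<omega>) sequentially"
      proof eventually_elim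
        case (elim n)
        show ?case
        proof (cases "\<exists>K\<ge>1. \<forall>K'\<ge>1. crit p Theta pen Z n K' \<omega> \<le> crit p Theta pen Z n K \<omega>")
          case True
          define L where "L = (LEAST K. 1 \<le> K \<and> (\<forall>K'\<ge>1. crit p Theta pen Z n K' \<omega> \<le> crit p Theta pen Z n K \<omega>))"
          have L: "1 \<le> L \<and> (\<forall>K'\<ge>1. crit p Theta pen Z n K' \<omega> \<le> crit p Theta pen Z n L \<omega>)"
            unfolding L_def by (rule LeastI_ex) (use True in blast)
          have "Kstar \<le> L"
          proof (rule ccontr)
            assume "\<not> Kstar \<le> L"
            then have "L \<in> {1..<Kstar}" using L by auto
            then have "crit p Theta pen Z n L \<omega> < crit p Theta pen Z n Kstar \<omega>" using elim by auto
            moreover have "crit p Theta pen Z n Kstar \<omega> \<le> crit p Theta pen Z n L \<omega>" using L Kstar_pos by auto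
            ultimately show False by simp
          qed
          then show ?thesis using True unfolding KhatG_def L_def[symmetric] by simp
        next
          case False
          then show ?thesis unfolding KhatG_def by (subst if_not_P[OF False]) simp
        qed
      qed
    qed
  qed
  have KLset: "KL_set Q (model_class mu p Theta K) = (INF \<theta>\<in>Theta K. ereal (- ED \<theta>))" if "1 \<le> K" for K
  proof -
    have "KL_set Q (model_class mu p Theta K) = (INF \<theta>\<in>Theta K. KL Q (dens_measure mu (p \<theta>)))"
      unfolding KL_set_def mc[OF that] by (simp add: image_image)
    also have "\<dots> = (INF \<theta>\<in>Theta K. ereal (- ED \<theta>))"
      by (rule INF_cong[OF refl], rule KL_eq) (use that in auto)
    finally show ?thesis .
  qed
  have parta: "AE \<omega> in M. eventually (\<lambda>n. enat Kstar \<le> KhatL p Theta pen Z n \<omega>) sequentially"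
    if hyp: "\<forall>K\<ge>1. dens_measure mu pstar \<notin> model_class mu p Theta K \<longrightarrow>
             KL_set (dens_measure mu pstar) (model_class mu p Theta (Suc K))
               < KL_set (dens_measure mu pstar) (model_class mu p Theta K)"
  proof -
    have aK: "AE \<omega> in M. eventually (\<lambda>n. crit p Theta pen Z n K \<omega> < crit p Theta pen Z n (Suc K) \<omega>) sequentially"
      if K: "K \<in> {1..<Kstar}" for K
    proof -
      have K1: "1 \<le> K" "K < Kstar" using K by auto
      have "Q \<notin> model_class mu p Theta K"
      proof
        assume "Q \<in> model_class mu p Theta K"
        then obtain \<theta> where "\<theta> \<in> Theta K" "Q = dens_measure mu (p \<theta>)" using mc[OF K1(1)] by auto
        then show False using notin[OF K1] by metis
      qed
      then have "KL_set Q (model_class mu p Theta (Suc K)) < KL_set Q (model_class mu p Theta K)"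
        using hyp K1 by auto
      then have lt: "(INF \<theta>\<in>Theta (Suc K). ereal (- ED \<theta>)) < (INF \<theta>\<in>Theta K. ereal (- ED \<theta>))"
        using KLset[of K] KLset[of "Suc K"] K1 by simp
      then obtain \<theta>1 where th1: "\<theta>1 \<in> Theta (Suc K)" "ereal (- ED \<theta>1) < (INF \<theta>\<in>Theta K. ereal (- ED \<theta>))"
        by (auto simp: INF_less_iff)
      then obtain r where r: "ereal (- ED \<theta>1) < ereal r" "ereal r < (INF \<theta>\<in>Theta K. ereal (- ED \<theta>))"
        using ereal_dense2 by blast
      have th1T: "\<theta>1 \<in> Tinf" using th1 by auto
      define c where "c = - r"
      have cK: "\<forall>\<theta>\<in>Theta K. ED \<theta> < c"
      proof
        fix \<theta> assume th: "\<theta> \<in> Theta K"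
        have "(INF \<theta>\<in>Theta K. ereal (- ED \<theta>)) \<le> ereal (- ED \<theta>)" by (rule INF_lower[OF th])
        then have "ereal r < ereal (- ED \<theta>)" using r(2) by (rule order.strict_trans2[rotated])
        then have "r < - ED \<theta>" by simp
        then show "ED \<theta> < c" by (simp add: c_def)
      qed
      have c1: "c < ED \<theta>1" using r(1) by (simp add: c_def)
      define c' where "c' = (ED \<theta>1 + c) / 2"
      have c'1: "c < c'" "c' < ED \<theta>1" using c1 by (auto simp: c'_def)
      have ub: "AE \<omega> in M. eventually (\<lambda>n. \<forall>\<theta>\<in>Theta K. (\<Sum>i<n. D \<theta> (Z i \<omega>)) \<le> real n * c) sequentially"
        by (rule UB[OF K1(1) cmp[OF K1(1)] cK])
      have mD: "(\<lambda>z. - D \<theta>1 z) \<in> borel_measurable borel" by (intro borel_measurable_uminus D_b[OF th1T])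
      have iD: "integrable Q (\<lambda>z. - D \<theta>1 z)" by (rule integrable_minus[OF D_int[OF th1T]])
      have "ED \<theta>1 - c' > 0" using c'1 by simp
      from slln_Q[OF mD iD this]
      have lb0: "AE \<omega> in M. eventually (\<lambda>n. (\<Sum>i<n. - D \<theta>1 (Z i \<omega>)) \<le> real n * ((\<integral>z. - D \<theta>1 z \<partial>Q) + (ED \<theta>1 - c'))) sequentially" .
      have eqI: "(\<integral>z. - D \<theta>1 z \<partial>Q) = - ED \<theta>1" by (rule Bochner_Integration.integral_minus)
      have lb: "AE \<omega> in M. eventually (\<lambda>n. (\<Sum>i<n. - D \<theta>1 (Z i \<omega>)) \<le> real n * (- c')) sequentially"
        using lb0 unfolding eqI by simp
      have pe: "eventually (\<lambda>n. pen n (Suc K) < (c' - c) * real n) sequentially"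
        by (rule pen_small) (use A4_small c'1 in auto)
      from ub lb show ?thesis
      proof eventually_elim
        case (elim \<omega>)
        from elim(1) elim(2) pe show ?case
        proof eventually_elim
          case elim2: (elim n)
          have s1: "(\<Sum>i<n. D \<theta>1 (Z i \<omega>)) \<ge> real n * c'"
          proof -
            have "(\<Sum>i<n. - D \<theta>1 (Z i \<omega>)) = - (\<Sum>i<n. D \<theta>1 (Z i \<omega>))" by (rule sum_negf)
            then show ?thesis using elim2(2) by linarith
          qed
          have "crit p Theta pen Z n K \<omega> \<le> ereal ((\<Sum>i<n. ln (pstar (Z i \<omega>))) + real n * c - pen n K)"
            by (rule crit_upper) (use elim2(1) sumD in fastforce)
          also have "\<dots> < ereal ((\<Sum>i<n. ln (pstar (Z i \<omega>))) + real n * c' - pen n (Suc K))"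
          proof -
            have "0 < pen n K" using A4_pos K1 by auto
            then show ?thesis using elim2(3) by (simp add: algebra_simps)
          qed
          also have "\<dots> \<le> ereal ((\<Sum>i<n. ln (p \<theta>1 (Z i \<omega>))) - pen n (Suc K))"
          proof -
            have "(\<Sum>i<n. ln (p \<theta>1 (Z i \<omega>))) = (\<Sum>i<n. ln (pstar (Z i \<omega>))) + (\<Sum>i<n. D \<theta>1 (Z i \<omega>))"
              by (simp add: sum_subtractf)
            then show ?thesis using s1 by simp
          qed
          also have "\<dots> \<le> crit p Theta pen Z n (Suc K) \<omega>" by (rule crit_lower[where \<theta>=\<theta>1 and Theta=Theta and K="Suc K" and n=n and p=p and Z=Z and \<omega>=\<omega> and pen=pen, OF th1(1)])
          finally show ?case .
        qed
      qed
    qed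
    have "AE \<omega> in M. \<forall>K\<in>{1..<Kstar}. eventually (\<lambda>n. crit p Theta pen Z n K \<omega> < crit p Theta pen Z n (Suc K) \<omega>) sequentially"
      by (rule AE_finite_allI) (use aK in auto)
    then show ?thesis
    proof (rule AE_mp, intro AE_I2 impI)
      fix \<omega> assume "\<forall>K\<in>{1..<Kstar}. eventually (\<lambda>n. crit p Theta pen Z n K \<omega> < crit p Theta pen Z n (Suc K) \<omega>) sequentially"
      then have "eventually (\<lambda>n. \<forall>K\<in>{1..<Kstar}. crit p Theta pen Z n K \<omega> < crit p Theta pen Z n (Suc K) \<omega>) sequentially"
        by (rule eventually_ball_finite[rotated]) simp
      then show "eventually (\<lambda>n. enat Kstar \<le> KhatL p Theta pen Z n \<omega>) sequentially"
      proof eventually_elim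
        case (elim n)
        show ?case unfolding KhatL_def
        proof (rule Inf_greatest)
          fix x assume "x \<in> {enat K |K. 1 \<le> K \<and> crit p Theta pen Z n (Suc K) \<omega> \<le> crit p Theta pen Z n K \<omega>}"
          then obtain K where K: "x = enat K" "1 \<le> K" "crit p Theta pen Z n (Suc K) \<omega> \<le> crit p Theta pen Z n K \<omega>"
            by auto
          have "Kstar \<le> K"
          proof (rule ccontr)
            assume "\<not> Kstar \<le> K"
            then have "K \<in> {1..<Kstar}" using K by auto
            then show False using elim K(3) by fastforce
          qed
          then show "enat Kstar \<le> x" using K(1) by simp
        qed
      qed
    qed
  qed
  show ?thesis using parta partb by blast
qed


end
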